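(* Let $G$ be an abelian group with no elements of order $2$, $F$ a field of characteristic $0$, and let $R=M_n(F)$ carry the elementary $G$-grading induced by an $n$-tuple $(g_1,\dots,g_n)$ of pairwise distinct elements of $G$. Suppose that there exists $g\in G$ with $\dim R_g=1$ and that $R$ satisfies no non-trivial multilinear graded monomial identity of length $2$. Then the grading on $R$ is isomorphic to a coarsening of the $\mathbb{Z}^{\lfloor n/2\rfloor}$-grading $\Gamma_n$ defined below; that is, there is an algebra automorphism $\varphi$ of $M_n(F)$ such that for every $u\in\mathbb{Z}^{\lfloor n/2\rfloor}$ there is $g\in G$ with $\varphi(\Gamma_{n,u})\subseteq R_g$. Equivalently, after reordering the tuple and translating it, the grading is induced by $(h_1,\dots,h_n)$ satisfying $h_{t+1}-h_t=h_{n-t+1}-h_{n-t}$ for $t=1,\dots,n-1$.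
   Context: The elementary grading on $M_n(F)$ induced by $(g_1,\dots,g_n)$ in an additive group is $R_g=\mathrm{span}\{e_{pq}: g_q-g_p=g\}$. The grading $\Gamma_n$: let $m=\lfloor n/2\rfloor$ and $e_1,\dots,e_m$ the standard basis of $\mathbb{Z}^m$; put $d_i=e_i$ for $1\leq i\leq m$ and $d_i=d_{n-i}$ for $m<i\leq n-1$; let $\overline{g}=(g_1,\dots,g_n)$ with $g_1=0$ and $g_{i+1}=g_i+d_i$; $\Gamma_n$ is the elementary $\mathbb{Z}^m$-grading on $M_n(F)$ induced by $\overline g$, with components $\Gamma_{n,u}=\mathrm{span}\{e_{pq}: g_q-g_p=u\}$. A grading $\Gamma'$ is a coarsening of $\Gamma$ if every homogeneous component of $\Gamma$ is contained in some homogeneous component of $\Gamma'$. A graded monomial identity is trivial if it lies in the $T_G$-ideal generated by the variables whose degree is outside the support of the grading, and non-trivial otherwise; its length is its number of variables. *)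

theory Defs
  imports "Jordan_Normal_Form.Matrix" "HOL-Library.Function_Algebras"
begin

text \<open>Matrices in M_n(F) are Jordan_Normal_Form matrices in carrier_mat n n,
  indices 0..n-1 (paper's index p corresponds to p+1 here).\<close>

text \<open>Homogeneous component of the elementary grading induced by the tuple g:
  the span of the matrix units e_pq with g q - g p = h, i.e. the matrices
  supported on those positions.\<close>
definition elem_comp :: "nat \<Rightarrow> (nat \<Rightarrow> 'g::ab_group_add) \<Rightarrow> 'g \<Rightarrow> 'f::field mat set" where
  "elem_comp n g h = {A \<in> carrier_mat n n. \<forall>p<n. \<forall>q<n. A $$ (p,q) \<noteq> 0 \<longrightarrow> g q - g p = h}"

definition dim_one :: "nat \<Rightarrow> 'f::field mat set \<Rightarrow> bool" where
  "dim_one n V \<longleftrightarrow> (\<exists>A\<in>V. A \<noteq> 0\<^sub>m n n \<and> V = {c \<cdot>\<^sub>m A | c. True})"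

definition in_support :: "nat \<Rightarrow> (nat \<Rightarrow> 'g::ab_group_add) \<Rightarrow> 'f::field itself \<Rightarrow> 'g \<Rightarrow> bool" where
  "in_support n g TYPE('f) h \<longleftrightarrow> (elem_comp n g h :: 'f::field mat set) \<noteq> {0\<^sub>m n n}"

definition monomial_identity2 :: "nat \<Rightarrow> (nat \<Rightarrow> 'g::ab_group_add) \<Rightarrow> 'f::field itself \<Rightarrow> 'g \<Rightarrow> 'g \<Rightarrow> bool" where
  "monomial_identity2 n g TYPE('f) a b \<longleftrightarrow>
     (\<forall>A \<in> (elem_comp n g a :: 'f mat set). \<forall>B \<in> elem_comp n g b. A * B = 0\<^sub>m n n)"

text \<open>x^(a) y^(b) is trivial iff it lies in the T_G-ideal generated by the variables
  of degree outside the support; this ideal is spanned by the monomials having a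
  consecutive subword whose degree is outside the support, so for length 2 this
  means one of a, b, a+b is outside the support.\<close>
definition nontrivial_monomial2 :: "nat \<Rightarrow> (nat \<Rightarrow> 'g::ab_group_add) \<Rightarrow> 'f::field itself \<Rightarrow> 'g \<Rightarrow> 'g \<Rightarrow> bool" where
  "nontrivial_monomial2 n g TYPE('f) a b \<longleftrightarrow>
     in_support n g TYPE('f) a \<and> in_support n g TYPE('f) b \<and> in_support n g TYPE('f) (a + b)"

definition mat_alg_aut :: "nat \<Rightarrow> ('f::field mat \<Rightarrow> 'f mat) \<Rightarrow> bool" where
  "mat_alg_aut n \<phi> \<longleftrightarrow> bij_betw \<phi> (carrier_mat n n) (carrier_mat n n) \<and>
     (\<forall>A\<in>carrier_mat n n. \<forall>B\<in>carrier_mat n n.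
        \<phi> (A + B) = \<phi> A + \<phi> B \<and> \<phi> (A * B) = \<phi> A * \<phi> B) \<and>
     (\<forall>c. \<forall>A\<in>carrier_mat n n. \<phi> (c \<cdot>\<^sub>m A) = c \<cdot>\<^sub>m \<phi> A)"

text \<open>The grading Gamma_n. Z^m is represented by nat \<Rightarrow> int (coordinates 1..m used;
  all others are 0). Paper's e_i, d_i (1-based), and g_{p+1} at 0-based position p.\<close>
definition unit_vec_Z :: "nat \<Rightarrow> (nat \<Rightarrow> int)" where
  "unit_vec_Z i = (\<lambda>j. if j = i then 1 else 0)"

definition gamma_d :: "nat \<Rightarrow> nat \<Rightarrow> (nat \<Rightarrow> int)" where
  "gamma_d n i = (if i \<le> n div 2 then unit_vec_Z i else unit_vec_Z (n - i))"

definition gamma_g :: "nat \<Rightarrow> nat \<Rightarrow> (nat \<Rightarrow> int)" where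
  "gamma_g n p = (\<Sum>i\<in>{1..p}. gamma_d n i)"

definition Gamma :: "nat \<Rightarrow> (nat \<Rightarrow> int) \<Rightarrow> 'f::field mat set" where
  "Gamma n u = elem_comp n (gamma_g n) u"

end

theory Submission
  imports Defs
begin


definition unitm :: "nat \<Rightarrow> nat \<Rightarrow> nat \<Rightarrow> 'f::field mat" where
  "unitm n p q = mat n n (\<lambda>(i,j). if i = p \<and> j = q then 1 else 0)"

lemma unitm_in:
  assumes "p < n" "q < n" "g q - g p = h"
  shows "(unitm n p q :: 'f::field mat) \<in> elem_comp n g h"
  using assms unfolding elem_comp_def unitm_def by auto

lemma unitm_nz:
  assumes "p < n" "q < n"
  shows "(unitm n p q :: 'f::field mat) \<noteq> 0\<^sub>m n n"
proof
  assume "(unitm n p q :: 'f mat) = 0\<^sub>m n n"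
  then have "(unitm n p q :: 'f mat) $$ (p,q) = (0\<^sub>m n n :: 'f mat) $$ (p,q)" by simp
  then show False using assms unfolding unitm_def by simp
qed

lemma unitm_insupp:
  assumes "p < n" "q < n" "g q - g p = h"
  shows "in_support n g TYPE('f::field) h"
  unfolding in_support_def
  using unitm_in[OF assms, where 'f='f] unitm_nz[OF assms(1,2), where 'f='f] by auto

lemma nz_entry:
  assumes "A \<in> carrier_mat n n" "A \<noteq> 0\<^sub>m n n"
  shows "\<exists>i j. i < n \<and> j < n \<and> A $$ (i,j) \<noteq> 0"
proof (rule ccontr)
  assume "\<not> ?thesis"
  then have "A = 0\<^sub>m n n" using assms(1) by (intro eq_matI) auto
  then show False using assms(2) by simp
qed

lemma uniq_pair:
  fixes g :: "nat \<Rightarrow> 'g::ab_group_add"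
  assumes "dim_one n (elem_comp n g h :: 'f::field mat set)"
  shows "\<exists>p0 q0. p0 < n \<and> q0 < n \<and> g q0 - g p0 = h \<and>
     (\<forall>p q. p < n \<longrightarrow> q < n \<longrightarrow> g q - g p = h \<longrightarrow> p = p0 \<and> q = q0)"
proof -
  obtain A :: "'f mat" where A: "A \<in> elem_comp n g h" "A \<noteq> 0\<^sub>m n n"
    and V: "elem_comp n g h = {c \<cdot>\<^sub>m A | c. True}"
    using assms unfolding dim_one_def by blast
  have Ac: "A \<in> carrier_mat n n" using A unfolding elem_comp_def by auto
  obtain p0 q0 where pq: "p0 < n" "q0 < n" "A $$ (p0,q0) \<noteq> 0" using nz_entry[OF Ac A(2)] by blast
  have h0: "g q0 - g p0 = h" using A(1) pq unfolding elem_comp_def by auto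
  have "p = p0 \<and> q = q0" if "p < n" "q < n" "g q - g p = h" for p q
  proof -
    have "(unitm n p q :: 'f mat) \<in> elem_comp n g h" using unitm_in[OF that] .
    then obtain c where c: "(unitm n p q :: 'f mat) = c \<cdot>\<^sub>m A" using V by auto
    have "(unitm n p q :: 'f mat) $$ (p0,q0) = c * A $$ (p0,q0)" using c pq Ac by simp
    moreover have "(unitm n p q :: 'f mat) $$ (p,q) = c * A $$ (p,q)" using c that Ac by simp
    ultimately show ?thesis using that pq unfolding unitm_def by (auto split: if_splits)
  qed
  then show ?thesis using pq h0 by blast
qed

lemma prod_nz:
  assumes "A \<in> carrier_mat n n" "B \<in> carrier_mat n n" "A * B \<noteq> 0\<^sub>m n n"
  shows "\<exists>i j k. i < n \<and> j < n \<and> k < n \<and> A $$ (i,j) \<noteq> 0 \<and> B $$ (j,k) \<noteq> 0"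
proof -
  have "A * B \<in> carrier_mat n n" using assms by auto
  then obtain i k where ik: "i < n" "k < n" "(A * B) $$ (i,k) \<noteq> 0" using nz_entry assms(3) by blast
  then have "(\<Sum>j\<in>{0..<n}. A $$ (i,j) * B $$ (j,k)) \<noteq> 0"
    using assms by (simp add: scalar_prod_def)
  then obtain j where "j \<in> {0..<n}" "A $$ (i,j) * B $$ (j,k) \<noteq> 0"
    by (meson sum.neutral)
  then show ?thesis using ik by (metis atLeastLessThan_iff mult_zero_left mult_zero_right)
qed



lemma perm_exists:
  fixes \<tau> :: "nat \<Rightarrow> nat"
  assumes inv: "\<And>x. x < n \<Longrightarrow> \<tau> x < n \<and> \<tau> (\<tau> x) = x"
    and fix1: "\<And>x y. x < n \<Longrightarrow> y < n \<Longrightarrow> \<tau> x = x \<Longrightarrow> \<tau> y = y \<Longrightarrow> x = y"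
  shows "\<exists>\<sigma>. bij_betw \<sigma> {..<n} {..<n} \<and> (\<forall>t<n. \<sigma> (n - 1 - t) = \<tau> (\<sigma> t))"
proof -
  define T where "T = {x. x < n \<and> x < \<tau> x}"
  define F where "F = {x. x < n \<and> \<tau> x = x}"
  define k where "k = card T"
  have finT: "finite T" unfolding T_def by auto
  have finF: "finite F" unfolding F_def by auto
  obtain f where f: "bij_betw f {0..<k} T" using ex_bij_betw_nat_finite[OF finT] k_def by blast
  have cov: "{..<n} = T \<union> \<tau> ` T \<union> F"
  proof
    show "{..<n} \<subseteq> T \<union> \<tau> ` T \<union> F"
    proof
      fix x assume x: "x \<in> {..<n}"
      show "x \<in> T \<union> \<tau> ` T \<union> F"
      proof (cases "x < \<tau> x")
        case True then show ?thesis using x T_def by auto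
      next
        case False
        show ?thesis
        proof (cases "\<tau> x = x")
          case True then show ?thesis using x F_def by auto
        next
          case False
          then have "\<tau> x < x" using \<open>\<not> x < \<tau> x\<close> by auto
          then have "\<tau> x \<in> T" using x inv[of x] T_def by auto
          moreover have "x = \<tau> (\<tau> x)" using x inv by auto
          ultimately show ?thesis by blast
        qed
      qed
    qed
    show "T \<union> \<tau> ` T \<union> F \<subseteq> {..<n}" using inv unfolding T_def F_def by auto
  qed
  have d1: "T \<inter> \<tau> ` T = {}"
  proof (rule ccontr)
    assume "T \<inter> \<tau> ` T \<noteq> {}"
    then obtain y where y: "y \<in> T" "\<tau> y \<in> T" by auto
    then show False using inv[of y] unfolding T_def by auto
  qed
  have d2: "(T \<union> \<tau> ` T) \<inter> F = {}"
    using inv unfolding T_def F_def by force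
  have injT: "inj_on \<tau> T" by (rule inj_onI) (metis inv T_def mem_Collect_eq)
  have cardF: "card F \<le> 1" using fix1 finF unfolding F_def
    by (auto simp: card_le_Suc0_iff_eq)
  have "n = card (T \<union> \<tau> ` T \<union> F)" using cov by (metis card_lessThan)
  also have "\<dots> = card (T \<union> \<tau> ` T) + card F" using d2 finT finF by (simp add: card_Un_disjoint)
  also have "card (T \<union> \<tau> ` T) = card T + card (\<tau> ` T)" using d1 finT by (simp add: card_Un_disjoint)
  also have "card (\<tau> ` T) = k" using injT k_def by (simp add: card_image)
  finally have nk: "n = 2 * k + card F" using k_def by simp
  define s where "s = (SOME x. x \<in> F)"
  define \<sigma> where "\<sigma> i = (if i < k then f i else if n - 1 - i < k then \<tau> (f (n - 1 - i)) else s)" for i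
  have fT: "i < k \<Longrightarrow> f i \<in> T" for i using f bij_betwE by fastforce
  have mid: "i < n \<Longrightarrow> \<not> i < k \<Longrightarrow> \<not> n - 1 - i < k \<Longrightarrow> i = k \<and> n = 2 * k + 1 \<and> s \<in> F" for i
  proof -
    assume a: "i < n" "\<not> i < k" "\<not> n - 1 - i < k"
    then have "card F = 1" using nk cardF by auto
    then have "F \<noteq> {}" by auto
    then have "s \<in> F" unfolding s_def by (simp add: some_in_eq)
    then show ?thesis using a nk \<open>card F = 1\<close> by auto
  qed
  have range: "\<sigma> i \<in> T \<and> i < k \<or> \<sigma> i \<in> \<tau> ` T \<and> \<not> i < k \<and> n - 1 - i < k \<or> \<sigma> i \<in> F \<and> i = k \<and> n = 2 * k + 1"
    if "i < n" for i
    using that fT mid unfolding \<sigma>_def by (auto split: if_splits)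
  have into: "\<sigma> ` {..<n} \<subseteq> {..<n}" using range cov by blast
  have inj: "inj_on \<sigma> {..<n}"
  proof (rule inj_onI)
    fix i j assume i: "i \<in> {..<n}" and j: "j \<in> {..<n}" and e: "\<sigma> i = \<sigma> j"
    have fi: "inj_on f {0..<k}" using f bij_betw_def by blast
    have i': "i < n" and j': "j < n" using i j by auto
    have tinj: "a < k \<Longrightarrow> b < k \<Longrightarrow> \<tau> (f a) = \<tau> (f b) \<Longrightarrow> a = b" for a b
    proof -
      assume ab: "a < k" "b < k" "\<tau> (f a) = \<tau> (f b)"
      have "f a = f b" using inj_onD[OF injT ab(3)] fT ab(1,2) by blast
      then show "a = b" using inj_onD[OF fi] ab(1,2) by simp
    qed
    have finj: "a < k \<Longrightarrow> b < k \<Longrightarrow> f a = f b \<Longrightarrow> a = b" for a b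
      using inj_onD[OF fi] by simp
    have c1: "x < k \<Longrightarrow> \<sigma> x = f x \<and> \<sigma> x \<in> T" for x
      using fT unfolding \<sigma>_def by simp
    have c2: "\<not> x < k \<Longrightarrow> n - 1 - x < k \<Longrightarrow> \<sigma> x = \<tau> (f (n - 1 - x)) \<and> \<sigma> x \<in> \<tau> ` T" for x
      using fT unfolding \<sigma>_def by simp
    have c3: "x < n \<Longrightarrow> \<not> x < k \<Longrightarrow> \<not> n - 1 - x < k \<Longrightarrow> x = k \<and> \<sigma> x \<in> F" for x
      using mid unfolding \<sigma>_def by simp
    have "(T \<union> \<tau> ` T) \<inter> F = {}" by (rule d2)
    then have d2a: "\<And>z. z \<in> T \<Longrightarrow> z \<in> F \<Longrightarrow> False" and d2b: "\<And>z. z \<in> \<tau> ` T \<Longrightarrow> z \<in> F \<Longrightarrow> False"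
      by blast+
    have d1a: "\<And>z. z \<in> T \<Longrightarrow> z \<in> \<tau> ` T \<Longrightarrow> False" using d1 by blast
    show "i = j"
    proof (cases "i < k")
      case ik: True
      show ?thesis
      proof (cases "j < k")
        case True then show ?thesis using ik c1 finj e by metis
      next
        case jk: False
        show ?thesis
        proof (cases "n - 1 - j < k")
          case True
          then have "\<sigma> j \<in> \<tau> ` T" using c2 jk by blast
          moreover have "\<sigma> j \<in> T" using c1[OF ik] e by metis
          ultimately show ?thesis using d1a by blast
        next
          case False
          then have "\<sigma> j \<in> F" using c3 jk j' by blast
          moreover have "\<sigma> j \<in> T" using c1[OF ik] e by metis
          ultimately show ?thesis using d2a by blast
        qed
      qed
    next
      case ik: False
      show ?thesis
      proof (cases "n - 1 - i < k")
        case i2: True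
        show ?thesis
        proof (cases "j < k")
          case True
          then have "\<sigma> i \<in> T" using c1[OF True] e by metis
          moreover have "\<sigma> i \<in> \<tau> ` T" using c2 ik i2 by blast
          ultimately show ?thesis using d1a by blast
        next
          case jk: False
          show ?thesis
          proof (cases "n - 1 - j < k")
            case True
            then have "\<tau> (f (n - 1 - i)) = \<tau> (f (n - 1 - j))" using c2 ik i2 jk e by metis
            then have "n - 1 - i = n - 1 - j" using tinj i2 True by blast
            then show ?thesis using i' j' by simp
          next
            case False
            then have "\<sigma> j \<in> F" using c3 jk j' by blast
            moreover have "\<sigma> j \<in> \<tau> ` T" using c2[OF ik i2] e by metis
            ultimately show ?thesis using d2b by blast
          qed
        qed
      next
        case i2: False
        then have ik3: "i = k" "\<sigma> i \<in> F" using c3 ik i' by blast+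
        show ?thesis
        proof (cases "j < k")
          case True
          then have "\<sigma> i \<in> T" using c1[OF True] e by metis
          then show ?thesis using ik3 d2a by blast
        next
          case jk: False
          show ?thesis
          proof (cases "n - 1 - j < k")
            case True
            then have "\<sigma> i \<in> \<tau> ` T" using c2[OF jk True] e by metis
            then show ?thesis using ik3 d2b by blast
          next
            case False
            then show ?thesis using c3 jk j' ik3 by blast
          qed
        qed
      qed
    qed
  qed
  have bij: "bij_betw \<sigma> {..<n} {..<n}"
    using inj into by (simp add: bij_betw_def endo_inj_surj)
  have sym: "\<sigma> (n - 1 - t) = \<tau> (\<sigma> t)" if t: "t < n" for t
  proof (cases "t < k")
    case True
    then have "\<not> n - 1 - t < k" "n - 1 - (n - 1 - t) = t" using nk t by auto
    then show ?thesis using True unfolding \<sigma>_def by auto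
  next
    case False
    show ?thesis
    proof (cases "n - 1 - t < k")
      case True
      then have "f (n - 1 - t) < n" using fT T_def by auto
      then show ?thesis using True False inv unfolding \<sigma>_def by auto
    next
      case False2: False
      then have "t = k \<and> n = 2 * k + 1 \<and> s \<in> F" using mid t False by blast
      then show ?thesis using F_def unfolding \<sigma>_def by auto
    qed
  qed
  show ?thesis using bij sym by blast
qed



fun nmul :: "nat \<Rightarrow> 'a::monoid_add \<Rightarrow> 'a" where
  "nmul 0 x = 0"
| "nmul (Suc k) x = x + nmul k x"

lemma nmul_add: "nmul (a + b) (x::'a::monoid_add) = nmul a x + nmul b x"
  by (induction a) (simp_all add: add.assoc)

definition Phi :: "nat \<Rightarrow> (nat \<Rightarrow> 'g::ab_group_add) \<Rightarrow> (nat \<Rightarrow> int) \<Rightarrow> 'g" where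
  "Phi n G u = (\<Sum>i\<in>{1..n div 2}. nmul (nat (u i)) (G i - G (i - 1)))"

lemma Phi_add:
  assumes "\<And>i. u i \<ge> 0" "\<And>i. v i \<ge> 0"
  shows "Phi n G (u + v) = Phi n G u + Phi n G v"
proof -
  have "nmul (nat ((u + v) i)) x = nmul (nat (u i)) x + nmul (nat (v i)) x" for i and x :: 'a
    using assms[of i] by (simp add: nat_add_distrib nmul_add)
  then show ?thesis unfolding Phi_def by (simp add: sum.distrib)
qed

lemma Phi_unit:
  assumes "1 \<le> k" "k \<le> n div 2"
  shows "Phi n G (unit_vec_Z k) = G k - G (k - 1)"
proof -
  have "Phi n G (unit_vec_Z k) = (\<Sum>i\<in>{1..n div 2}. if i = k then G i - G (i - 1) else 0)"
    unfolding Phi_def unit_vec_Z_def by (intro sum.cong) auto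
  also have "\<dots> = G k - G (k - 1)" using assms by (simp add: sum.delta)
  finally show ?thesis .
qed

lemma fun_sum_at: "finite A \<Longrightarrow> (sum f A) i = (\<Sum>j\<in>A. (f j i :: 'a::comm_monoid_add))"
  by (induction rule: finite_induct) auto

lemma gamma_g_nonneg: "gamma_g n p i \<ge> 0"
  unfolding gamma_g_def fun_sum_at[OF finite_atLeastAtMost]
  unfolding gamma_d_def unit_vec_Z_def
  by (auto intro!: sum_nonneg)

lemma gamma_repr:
  fixes G :: "nat \<Rightarrow> 'g::ab_group_add"
  assumes sym: "\<And>t. t < n \<Longrightarrow> G (n - 1 - t) = c - G t"
  shows "p < n \<Longrightarrow> G p = G 0 + Phi n G (gamma_g n p)"
proof (induction p)
  case 0
  have "gamma_g n 0 = 0" unfolding gamma_g_def by auto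
  then show ?case unfolding Phi_def by simp
next
  case (Suc p)
  define j where "j = Suc p"
  define kk where "kk = (if j \<le> n div 2 then j else n - j)"
  have j: "1 \<le> j" "j < n" using Suc.prems j_def by auto
  have kk: "1 \<le> kk" "kk \<le> n div 2" using j unfolding kk_def by auto
  have gd: "gamma_d n j = unit_vec_Z kk" unfolding gamma_d_def kk_def by auto
  have gs: "gamma_g n j = gamma_g n p + unit_vec_Z kk"
    using gd unfolding gamma_g_def j_def by simp
  have Dk: "G kk - G (kk - 1) = G j - G (j - 1)"
  proof (cases "j \<le> n div 2")
    case True then show ?thesis unfolding kk_def by simp
  next
    case False
    then have kk': "kk = n - j" unfolding kk_def by simp
    have nj: "n - 1 - (j - 1) = n - j" using j by simp
    have "G (n - 1 - (j - 1)) = c - G (j - 1)" using j by (intro sym) simp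
    then have "G (n - j) = c - G (j - 1)" unfolding nj .
    moreover have "G (n - j - 1) = c - G j" using sym[of j] j by (simp add: diff_commute)
    moreover have "n - j - 1 = kk - 1" using kk' by simp
    ultimately show ?thesis using kk' by (simp add: algebra_simps)
  qed
  have "Phi n G (gamma_g n j) = Phi n G (gamma_g n p) + Phi n G (unit_vec_Z kk)"
    unfolding gs by (rule Phi_add) (auto simp: gamma_g_nonneg unit_vec_Z_def)
  then have "Phi n G (gamma_g n j) = Phi n G (gamma_g n p) + (G j - G (j - 1))"
    using Phi_unit[OF kk, where G=G] Dk by simp
  moreover have "G p = G 0 + Phi n G (gamma_g n p)" using Suc by simp
  ultimately show ?case unfolding j_def[symmetric] using j_def by (simp add: algebra_simps)
qed

lemma gamma_compat:
  fixes G :: "nat \<Rightarrow> 'g::ab_group_add"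
  assumes sym: "\<And>t. t < n \<Longrightarrow> G (n - 1 - t) = c - G t"
    and lt: "p < n" "q < n" "p' < n" "q' < n"
    and eq: "gamma_g n q - gamma_g n p = gamma_g n q' - gamma_g n p'"
  shows "G q - G p = G q' - G p'"
proof -
  have e2: "gamma_g n q + gamma_g n p' = gamma_g n q' + gamma_g n p"
  proof
    fix i show "(gamma_g n q + gamma_g n p') i = (gamma_g n q' + gamma_g n p) i"
      using fun_cong[OF eq, of i] by simp
  qed
  have "G q + G p' = G 0 + G 0 + Phi n G (gamma_g n q + gamma_g n p')"
    using gamma_repr[where c=c and n=n and G=G, OF sym lt(2)] gamma_repr[where c=c and n=n and G=G, OF sym lt(3)]
    by (simp add: Phi_add gamma_g_nonneg algebra_simps)
  also have "\<dots> = G q' + G p"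
    unfolding e2
    using gamma_repr[where c=c and n=n and G=G, OF sym lt(4)] gamma_repr[where c=c and n=n and G=G, OF sym lt(1)]
    by (simp add: Phi_add gamma_g_nonneg algebra_simps)
  finally show ?thesis by (simp add: algebra_simps eq_diff_eq diff_eq_eq)
qed



definition permap :: "nat \<Rightarrow> (nat \<Rightarrow> nat) \<Rightarrow> 'f::field mat \<Rightarrow> 'f mat" where
  "permap n \<pi> B = mat n n (\<lambda>(i,j). B $$ (\<pi> i, \<pi> j))"

lemma permap_aut:
  assumes bij: "bij_betw \<pi> {..<n} {..<n}"
  shows "mat_alg_aut n (permap n \<pi> :: 'f::field mat \<Rightarrow> 'f mat)"
proof -
  define \<sigma> where "\<sigma> = inv_into {..<n} \<pi>"
  have bs: "bij_betw \<sigma> {..<n} {..<n}" using bij bij_betw_inv_into \<sigma>_def by blast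
  have ps: "i < n \<Longrightarrow> \<pi> (\<sigma> i) = i" for i using bij \<sigma>_def by (simp add: bij_betw_inv_into_right)
  have sp: "i < n \<Longrightarrow> \<sigma> (\<pi> i) = i" for i using bij \<sigma>_def by (simp add: bij_betw_inv_into_left)
  have pl: "i < n \<Longrightarrow> \<pi> i < n" for i using bij bij_betwE by blast
  have sl: "i < n \<Longrightarrow> \<sigma> i < n" for i using bs bij_betwE by blast
  have b: "bij_betw (permap n \<pi> :: 'f mat \<Rightarrow> 'f mat) (carrier_mat n n) (carrier_mat n n)"
  proof (rule bij_betw_byWitness[where f' = "permap n \<sigma>"])
    show "\<forall>a\<in>carrier_mat n n. permap n \<sigma> (permap n \<pi> a :: 'f mat) = a"
      by (auto simp: permap_def sl ps intro!: eq_matI)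
    show "\<forall>a\<in>carrier_mat n n. permap n \<pi> (permap n \<sigma> a :: 'f mat) = a"
      by (auto simp: permap_def pl sp intro!: eq_matI)
    show "permap n \<pi> ` carrier_mat n n \<subseteq> (carrier_mat n n :: 'f mat set)" by (auto simp: permap_def)
    show "permap n \<sigma> ` carrier_mat n n \<subseteq> (carrier_mat n n :: 'f mat set)" by (auto simp: permap_def)
  qed
  have m: "permap n \<pi> (A * B) = permap n \<pi> A * permap n \<pi> B"
    if A: "A \<in> carrier_mat n n" and B: "B \<in> carrier_mat n n" for A B :: "'f mat"
  proof (rule eq_matI)
    fix i j assume i: "i < dim_row (permap n \<pi> A * permap n \<pi> B)" and j: "j < dim_col (permap n \<pi> A * permap n \<pi> B)"
    then have i': "i < n" and j': "j < n" by (auto simp: permap_def)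
    have "permap n \<pi> (A * B) $$ (i,j) = (\<Sum>k\<in>{0..<n}. A $$ (\<pi> i, k) * B $$ (k, \<pi> j))"
      using A B i' j' pl by (simp add: permap_def scalar_prod_def)
    also have "\<dots> = (\<Sum>k\<in>{0..<n}. A $$ (\<pi> i, \<pi> k) * B $$ (\<pi> k, \<pi> j))"
      using sum.reindex_bij_betw[of \<pi> "{0..<n}" "{0..<n}" "\<lambda>k. A $$ (\<pi> i, k) * B $$ (k, \<pi> j)"]
        bij by (simp add: atLeast0LessThan)
    also have "\<dots> = (permap n \<pi> A * permap n \<pi> B) $$ (i,j)"
      using i' j' pl by (simp add: permap_def scalar_prod_def)
    finally show "permap n \<pi> (A * B) $$ (i,j) = (permap n \<pi> A * permap n \<pi> B) $$ (i,j)" .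
  qed (auto simp: permap_def)
  show ?thesis unfolding mat_alg_aut_def
  proof (intro conjI ballI allI)
    show "bij_betw (permap n \<pi> :: 'f mat \<Rightarrow> 'f mat) (carrier_mat n n) (carrier_mat n n)" by (rule b)
  next
    fix A B :: "'f mat" assume A: "A \<in> carrier_mat n n" and B: "B \<in> carrier_mat n n"
    show "permap n \<pi> (A + B) = permap n \<pi> A + permap n \<pi> B"
      using A B pl by (auto simp: permap_def intro!: eq_matI)
    show "permap n \<pi> (A * B) = permap n \<pi> A * permap n \<pi> B" by (rule m[OF A B])
  next
    fix c :: 'f and A :: "'f mat" assume A: "A \<in> carrier_mat n n"
    show "permap n \<pi> (c \<cdot>\<^sub>m A) = c \<cdot>\<^sub>m permap n \<pi> A"
      using A pl by (auto simp: permap_def intro!: eq_matI)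
  qed
qed

theorem mainTheorem10:
  fixes g :: "nat \<Rightarrow> 'g::ab_group_add" and n :: nat
  assumes no_order2: "\<forall>x::'g. x + x = 0 \<longrightarrow> x = 0"
    and char0: "CHAR('f::field) = 0"
    and distinct: "inj_on g {..<n}"
    and dim1: "\<exists>h. dim_one n (elem_comp n g h :: 'f mat set)"
    and no_id: "\<forall>a b. nontrivial_monomial2 n g TYPE('f) a b \<longrightarrow>
                       \<not> monomial_identity2 n g TYPE('f) a b"
  shows "\<exists>\<phi> :: 'f mat \<Rightarrow> 'f mat. mat_alg_aut n \<phi> \<and>
           (\<forall>u. \<exists>h. \<phi> ` Gamma n u \<subseteq> elem_comp n g h)"
proof -
  obtain h where hd: "dim_one n (elem_comp n g h :: 'f mat set)" using dim1 by blast
  obtain p0 q0 where p0: "p0 < n" and q0: "q0 < n" and h0: "g q0 - g p0 = h"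
    and un: "\<And>p q. p < n \<Longrightarrow> q < n \<Longrightarrow> g q - g p = h \<Longrightarrow> p = p0 \<and> q = q0"
    using uniq_pair[OF hd] by blast
  define c where "c = g p0 + g q0"
  have path: "\<exists>y. y < n \<and> g y = c - g x" if x: "x < n" for x
  proof -
    define a where "a = g q0 - g x"
    define b where "b = g x - g p0"
    have ab: "a + b = h" using h0 unfolding a_def b_def by (simp add: algebra_simps)
    have "nontrivial_monomial2 n g TYPE('f) a b"
      unfolding nontrivial_monomial2_def
      using unitm_insupp[OF x q0, of g a, where 'f='f] unitm_insupp[OF p0 x, of g b, where 'f='f]
        unitm_insupp[OF p0 q0, of g "a + b", where 'f='f] ab h0 a_def b_def by auto
    then have "\<not> monomial_identity2 n g TYPE('f) a b" using no_id by blast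
    then obtain A B :: "'f mat" where A: "A \<in> elem_comp n g a" and B: "B \<in> elem_comp n g b"
      and AB: "A * B \<noteq> 0\<^sub>m n n"
      unfolding monomial_identity2_def by blast
    have Ac: "A \<in> carrier_mat n n" and Bc: "B \<in> carrier_mat n n"
      using A B unfolding elem_comp_def by auto
    obtain i j k where ijk: "i < n" "j < n" "k < n" "A $$ (i,j) \<noteq> 0" "B $$ (j,k) \<noteq> 0"
      using prod_nz[OF Ac Bc AB] by blast
    have "g j - g i = a" using A ijk unfolding elem_comp_def by auto
    moreover have "g k - g j = b" using B ijk unfolding elem_comp_def by auto
    moreover have "g k - g i = (g k - g j) + (g j - g i)" by (simp add: algebra_simps)
    ultimately have "g k - g i = h" using ab by (simp add: add.commute)
    then have "i = p0" using un ijk by blast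
    then have "g j = c - g x" using \<open>g j - g i = a\<close> unfolding a_def c_def by (simp add: algebra_simps)
    then show ?thesis using ijk by blast
  qed
  define \<tau> where "\<tau> x = (SOME y. y < n \<and> g y = c - g x)" for x
  have tau: "\<tau> x < n \<and> g (\<tau> x) = c - g x" if "x < n" for x
    using someI_ex[OF path[OF that]] unfolding \<tau>_def by blast
  have inv: "\<tau> x < n \<and> \<tau> (\<tau> x) = x" if x: "x < n" for x
  proof -
    have t1: "\<tau> x < n" "g (\<tau> x) = c - g x" using tau[OF x] by auto
    have t2: "\<tau> (\<tau> x) < n" "g (\<tau> (\<tau> x)) = c - g (\<tau> x)" using tau[OF t1(1)] by auto
    have "g (\<tau> (\<tau> x)) = g x" using t1(2) t2(2) by simp
    then have "\<tau> (\<tau> x) = x" by (rule inj_onD[OF distinct]) (use t2(1) x in auto)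
    then show ?thesis using t1(1) by simp
  qed
  have fix1: "x = y" if "x < n" "y < n" "\<tau> x = x" "\<tau> y = y" for x y
  proof -
    have "g (\<tau> x) = c - g x" "g (\<tau> y) = c - g y" using tau that(1,2) by blast+
    then have "g x = c - g x" "g y = c - g y" using that(3,4) by simp_all
    then have e1: "g x + g x = c" and e2: "g y + g y = c" by (metis eq_diff_eq)+
    have "(g x - g y) + (g x - g y) = (g x + g x) - (g y + g y)" by (simp add: algebra_simps)
    then have "(g x - g y) + (g x - g y) = 0" using e1 e2 by simp
    then have "g x - g y = 0" using no_order2 by blast
    then have "g x = g y" by simp
    then show ?thesis by (rule inj_onD[OF distinct]) (use that(1,2) in auto)
  qed
  obtain \<sigma> where sb: "bij_betw \<sigma> {..<n} {..<n}" and ss: "\<And>t. t < n \<Longrightarrow> \<sigma> (n - 1 - t) = \<tau> (\<sigma> t)"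
    using perm_exists[of n \<tau>, OF inv fix1] by blast
  have sl: "t < n \<Longrightarrow> \<sigma> t < n" for t using sb bij_betwE by blast
  define G where "G = g \<circ> \<sigma>"
  have Gsym: "G (n - 1 - t) = c - G t" if "t < n" for t
    using ss[OF that] tau[OF sl[OF that]] unfolding G_def by simp
  define \<pi> where "\<pi> = inv_into {..<n} \<sigma>"
  have pb: "bij_betw \<pi> {..<n} {..<n}" using sb bij_betw_inv_into \<pi>_def by blast
  have pl: "i < n \<Longrightarrow> \<pi> i < n" for i using pb bij_betwE by blast
  have sp: "i < n \<Longrightarrow> \<sigma> (\<pi> i) = i" for i using sb \<pi>_def by (simp add: bij_betw_inv_into_right)
  have Gp: "i < n \<Longrightarrow> G (\<pi> i) = g i" for i using sp unfolding G_def by simp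
  have main: "\<exists>h. (permap n \<pi> :: 'f mat \<Rightarrow> 'f mat) ` Gamma n u \<subseteq> elem_comp n g h" for u
  proof (cases "\<exists>p q. p < n \<and> q < n \<and> gamma_g n q - gamma_g n p = u")
    case True
    then obtain p q where pq: "p < n" "q < n" "gamma_g n q - gamma_g n p = u" by blast
    have "(permap n \<pi> :: 'f mat \<Rightarrow> 'f mat) ` Gamma n u \<subseteq> elem_comp n g (G q - G p)"
    proof
      fix X :: "'f mat" assume "X \<in> permap n \<pi> ` Gamma n u"
      then obtain B where B: "B \<in> Gamma n u" and X: "X = permap n \<pi> B" by blast
      have "g j - g i = G q - G p" if ij: "i < n" "j < n" "X $$ (i,j) \<noteq> 0" for i j
      proof -
        have "B $$ (\<pi> i, \<pi> j) \<noteq> 0" using ij X by (simp add: permap_def)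
        then have "gamma_g n (\<pi> j) - gamma_g n (\<pi> i) = u"
          using B pl ij unfolding Gamma_def elem_comp_def by blast
        then have "G (\<pi> j) - G (\<pi> i) = G q - G p"
          using gamma_compat[where c=c and n=n and G=G, OF Gsym pl[OF ij(1)] pl[OF ij(2)] pq(1) pq(2)] pq(3)
          by simp
        then show ?thesis using Gp ij by simp
      qed
      then show "X \<in> elem_comp n g (G q - G p)" unfolding elem_comp_def X by (auto simp: permap_def)
    qed
    then show ?thesis by blast
  next
    case False
    have "(permap n \<pi> :: 'f mat \<Rightarrow> 'f mat) ` Gamma n u \<subseteq> elem_comp n g 0"
    proof
      fix X :: "'f mat" assume "X \<in> permap n \<pi> ` Gamma n u"
      then obtain B where B: "B \<in> Gamma n u" and X: "X = permap n \<pi> B" by blast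
      have "False" if ij: "i < n" "j < n" "X $$ (i,j) \<noteq> 0" for i j
      proof -
        have "B $$ (\<pi> i, \<pi> j) \<noteq> 0" using ij X by (simp add: permap_def)
        then have "gamma_g n (\<pi> j) - gamma_g n (\<pi> i) = u"
          using B pl ij unfolding Gamma_def elem_comp_def by blast
        then show False using False pl ij by blast
      qed
      then show "X \<in> elem_comp n g 0" unfolding elem_comp_def X by (auto simp: permap_def)
    qed
    then show ?thesis by blast
  qed
  show ?thesis using permap_aut[OF pb] main by blast
qed

end
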